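(* Let $\lambda$ be a positive integer, $\psi_0\in\mathbb{R}$ and $G(\psi)=\cos(\lambda\psi+\psi_0)$. Then the function $$\left(p_r+\frac{p_\psi}{\lambda r}\frac{\partial}{\partial\psi}\right)^\lambda G(\psi)$$ (the operator in brackets applied $\lambda$ times to $G$) is a constant of motion of the geodesic Hamiltonian $H_g=\frac12\left(p_r^2+\frac{p_\psi^2}{r^2}\right)$.
   Context: Phase space coordinates are $(r,\psi,p_r,p_\psi)$ with $r>0$ (polar coordinates on the Euclidean plane) and canonical Poisson bracket; $p_r$, $p_\psi$, $1/(\lambda r)$ act by multiplication. A constant of motion is a function with vanishing Poisson bracket with the Hamiltonian. *)

theory Defs
  imports "HOL-Analysis.Analysis"
begin

text \<open>Phase-space functions of the coordinates (r, psi, p_r, p_psi), r > 0.\<close>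
type_synonym phfun = "real \<Rightarrow> real \<Rightarrow> real \<Rightarrow> real \<Rightarrow> real"

definition d_r :: "phfun \<Rightarrow> phfun" where
  "d_r f r ps pr pps = deriv (\<lambda>x. f x ps pr pps) r"
definition d_psi :: "phfun \<Rightarrow> phfun" where
  "d_psi f r ps pr pps = deriv (\<lambda>x. f r x pr pps) ps"
definition d_pr :: "phfun \<Rightarrow> phfun" where
  "d_pr f r ps pr pps = deriv (\<lambda>x. f r ps x pps) pr"
definition d_ppsi :: "phfun \<Rightarrow> phfun" where
  "d_ppsi f r ps pr pps = deriv (\<lambda>x. f r ps pr x) pps"

definition poisson :: "phfun \<Rightarrow> phfun \<Rightarrow> phfun" where
  "poisson f g r ps pr pps =
     d_r f r ps pr pps * d_pr g r ps pr pps - d_pr f r ps pr pps * d_r g r ps pr pps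
   + d_psi f r ps pr pps * d_ppsi g r ps pr pps - d_ppsi f r ps pr pps * d_psi g r ps pr pps"

definition H_g :: phfun where
  "H_g r ps pr pps = (pr\<^sup>2 + pps\<^sup>2 / r\<^sup>2) / 2"

definition constant_of_motion :: "phfun \<Rightarrow> phfun \<Rightarrow> bool" where
  "constant_of_motion H f \<longleftrightarrow> (\<forall>r ps pr pps. r > 0 \<longrightarrow> poisson f H r ps pr pps = 0)"

definition opD :: "nat \<Rightarrow> phfun \<Rightarrow> phfun" where
  "opD lam f r ps pr pps = pr * f r ps pr pps + pps / (real lam * r) * d_psi f r ps pr pps"

end

theory Submission
  imports Defs
begin

lemma Re_deriv:
  assumes "(h has_field_derivative D) (at (of_real x))"
  shows "((\<lambda>t. Re (h (of_real t))) has_real_derivative Re D) (at x)"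
proof -
  have "((\<lambda>t. h (of_real t)) has_vector_derivative D) (at x)"
    using has_vector_derivative_real_field[OF assms] by simp
  then have "((\<lambda>t. Re (h (of_real t))) has_derivative (\<lambda>t. Re (t *\<^sub>R D))) (at x)"
    unfolding has_vector_derivative_def by (rule has_derivative_Re)
  moreover have "(\<lambda>t. Re (t *\<^sub>R D)) = (*) (Re D)" by (auto simp: mult.commute)
  ultimately show ?thesis unfolding has_field_derivative_def by simp
qed

lemma Re_deriv_eq:
  assumes "(h has_field_derivative D) (at (of_real x))"
  shows "deriv (\<lambda>t. Re (h (of_real t))) x = Re D"
  using Re_deriv[OF assms] by (rule DERIV_imp_deriv)

definition W :: "real \<Rightarrow> real \<Rightarrow> real \<Rightarrow> complex" where
  "W r pr pps = of_real pr + \<i> * of_real (pps / r)"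

definition Fk :: "nat \<Rightarrow> real \<Rightarrow> nat \<Rightarrow> phfun" where
  "Fk lam p0 k r ps pr pps = Re ((W r pr pps)^k * exp (\<i> * (of_real (real lam) * of_real ps + of_real p0)))"

lemma d1: "((\<lambda>z. (W r pr pps)^k * exp (\<i> * (of_real l * z + of_real p0))) has_field_derivative
   (W r pr pps)^k * (\<i> * of_real l) * exp (\<i> * (of_real l * of_real ps + of_real p0))) (at (of_real ps))"
  by (auto intro!: derivative_eq_intros simp: algebra_simps)

lemma dpsi_Fk: "d_psi (Fk lam p0 k) r ps pr pps =
   Re ((W r pr pps)^k * (\<i> * of_real (real lam)) * exp (\<i> * (of_real (real lam) * of_real ps + of_real p0)))"
  unfolding d_psi_def Fk_def by (rule Re_deriv_eq[OF d1])

lemma alg: assumes "(l::real) > 0"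
  shows "pr * Re A + pps / (l * r) * Re (A * (\<i> * of_real l)) = Re (A * (of_real pr + \<i> * of_real (pps / r)))"
proof (cases "r = 0")
  case True then show ?thesis by simp
next
  case False then show ?thesis using assms by (simp add: field_simps)
qed

lemma iter: assumes "lam > 0"
  shows "(opD lam ^^ k) (\<lambda>r ps pr pps. cos (real lam * ps + p0)) = Fk lam p0 k"
proof (induction k)
  case 0
  show ?case
  proof (intro ext)
    fix r ps pr pps
    have "exp (\<i> * (of_real (real lam) * of_real ps + of_real p0)) = cis (real lam * ps + p0)"
      by (simp add: cis_conv_exp algebra_simps)
    then show "(opD lam ^^ 0) (\<lambda>r ps pr pps. cos (real lam * ps + p0)) r ps pr pps = Fk lam p0 0 r ps pr pps"
      by (simp add: Fk_def)
  qed
next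
  case (Suc k)
  show ?case
  proof (intro ext)
    fix r ps pr pps
    define A where "A = (W r pr pps)^k * exp (\<i> * (of_real (real lam) * of_real ps + of_real p0))"
    have "(opD lam ^^ Suc k) (\<lambda>r ps pr pps. cos (real lam * ps + p0)) r ps pr pps
        = pr * Re A + pps / (real lam * r) * Re (A * (\<i> * of_real (real lam)))"
    proof -
      have "(opD lam ^^ Suc k) (\<lambda>r ps pr pps. cos (real lam * ps + p0)) r ps pr pps
        = pr * Fk lam p0 k r ps pr pps + pps / (real lam * r) * d_psi (Fk lam p0 k) r ps pr pps"
        by (simp add: Suc opD_def)
      also have "d_psi (Fk lam p0 k) r ps pr pps = Re (A * (\<i> * of_real (real lam)))"
        unfolding dpsi_Fk A_def by (simp only: mult_ac)
      also have "Fk lam p0 k r ps pr pps = Re A" by (simp add: Fk_def A_def)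
      finally show ?thesis .
    qed
    also have "\<dots> = Re (A * W r pr pps)"
      using assms unfolding W_def by (intro alg) simp
    also have "\<dots> = Fk lam p0 (Suc k) r ps pr pps"
      by (simp add: Fk_def A_def mult_ac)
    finally show "(opD lam ^^ Suc k) (\<lambda>r ps pr pps. cos (real lam * ps + p0)) r ps pr pps = Fk lam p0 (Suc k) r ps pr pps" .
  qed
qed

lemma main:
  fixes lam :: nat and p0 :: real
  assumes "lam > 0" and r: "r > 0"
  shows "poisson (Fk lam p0 lam) H_g r ps pr pps = 0"
proof -
  define E where "E = exp (\<i> * (of_real (real lam) * of_real ps + of_real p0))"
  define V where "V = W r pr pps ^ (lam - 1)"
  have WV: "W r pr pps ^ lam = W r pr pps * V"
    using assms(1) unfolding V_def by (cases lam) auto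
  have Dr: "d_r (Fk lam p0 lam) r ps pr pps = Re (of_nat lam * V * (- \<i> * of_real pps / (of_real r)^2) * E)"
  proof -
    have eq: "(\<lambda>x. Fk lam p0 lam x ps pr pps) = (\<lambda>x. Re ((\<lambda>z. (of_real pr + \<i> * (of_real pps / z))^lam * E) (of_real x)))"
      by (simp add: Fk_def W_def E_def)
    have der: "((\<lambda>z. (of_real pr + \<i> * (of_real pps / z))^lam * E) has_field_derivative
        of_nat lam * V * (- \<i> * of_real pps / (of_real r)^2) * E) (at (of_real r))"
      using r by (auto intro!: derivative_eq_intros simp: V_def W_def field_simps power2_eq_square)
    show ?thesis unfolding d_r_def eq by (rule Re_deriv_eq[OF der])
  qed
  have Dpr: "d_pr (Fk lam p0 lam) r ps pr pps = Re (of_nat lam * V * E)"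
  proof -
    have eq: "(\<lambda>x. Fk lam p0 lam r ps x pps) = (\<lambda>x. Re ((\<lambda>z. (z + \<i> * of_real (pps / r))^lam * E) (of_real x)))"
      by (simp add: Fk_def W_def E_def)
    have der: "((\<lambda>z. (z + \<i> * of_real (pps / r))^lam * E) has_field_derivative
        of_nat lam * V * E) (at (of_real pr))"
      by (auto intro!: derivative_eq_intros simp: V_def W_def)
    show ?thesis unfolding d_pr_def eq by (rule Re_deriv_eq[OF der])
  qed
  have Dpps: "d_ppsi (Fk lam p0 lam) r ps pr pps = Re (of_nat lam * V * (\<i> / of_real r) * E)"
  proof -
    have eq: "(\<lambda>x. Fk lam p0 lam r ps pr x) = (\<lambda>x. Re ((\<lambda>z. (of_real pr + z * (\<i> / of_real r))^lam * E) (of_real x)))"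
      by (simp add: Fk_def W_def E_def of_real_divide mult.commute)
    have der: "((\<lambda>z. (of_real pr + z * (\<i> / of_real r))^lam * E) has_field_derivative
        of_nat lam * V * (\<i> / of_real r) * E) (at (of_real pps))"
      using r by (auto intro!: derivative_eq_intros simp: V_def W_def of_real_divide mult.commute)
    show ?thesis unfolding d_ppsi_def eq by (rule Re_deriv_eq[OF der])
  qed
  have Dpsi: "d_psi (Fk lam p0 lam) r ps pr pps = Re (W r pr pps * V * (\<i> * of_real (real lam)) * E)"
    by (simp add: dpsi_Fk E_def WV)
  have Hr: "d_r H_g r ps pr pps = - (pps^2 / r^3)"
  proof -
    have "((\<lambda>x. H_g x ps pr pps) has_real_derivative - (pps^2 / r^3)) (at r)"
      unfolding H_g_def using r
      by (auto intro!: derivative_eq_intros simp: field_simps power2_eq_square power3_eq_cube)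
    then show ?thesis unfolding d_r_def by (rule DERIV_imp_deriv)
  qed
  have Hpr: "d_pr H_g r ps pr pps = pr"
  proof -
    have "((\<lambda>x. H_g r ps x pps) has_real_derivative pr) (at pr)"
      unfolding H_g_def by (auto intro!: derivative_eq_intros)
    then show ?thesis unfolding d_pr_def by (rule DERIV_imp_deriv)
  qed
  have Hpps: "d_ppsi H_g r ps pr pps = pps / r^2"
  proof -
    have "((\<lambda>x. H_g r ps pr x) has_real_derivative pps / r^2) (at pps)"
      unfolding H_g_def using r by (auto intro!: derivative_eq_intros simp: field_simps)
    then show ?thesis unfolding d_ppsi_def by (rule DERIV_imp_deriv)
  qed
  have Hpsi: "d_psi H_g r ps pr pps = 0"
    unfolding d_psi_def H_g_def by simp
  have "poisson (Fk lam p0 lam) H_g r ps pr pps =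
     Re (of_nat lam * V * E * ((- \<i> * of_real pps / (of_real r)^2) * of_real pr
        + of_real (pps^2 / r^3) + W r pr pps * \<i> * of_real (pps / r^2)))"
    unfolding poisson_def Dr Dpr Dpps Dpsi Hr Hpr Hpps Hpsi
    using r by (simp add: algebra_simps add_divide_distrib diff_divide_distrib)
  also have "(- \<i> * of_real pps / (of_real r)^2) * of_real pr
        + of_real (pps^2 / r^3) + W r pr pps * \<i> * of_real (pps / r^2) = 0"
    using r by (simp add: W_def field_simps power2_eq_square power3_eq_cube)
  finally show ?thesis by simp
qed

theorem mainTheorem5:
  fixes lam :: nat and psi0 :: real
  assumes "lam > 0"
  shows "constant_of_motion H_g
           ((opD lam ^^ lam) (\<lambda>r ps pr pps. cos (real lam * ps + psi0)))"
  unfolding iter[OF assms] constant_of_motion_def using main[OF assms] by blast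

end
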